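(* The following statements are equivalent: (1) $G^{>}_\nu\neq\emptyset$; (2) there exists $(h,\beta)\in\Gamma(\nu)$ with $\{k:\nu_k>h(0)\}\neq\emptyset$; (3) there exists $(h,\beta)\in\Gamma(\nu)$ such that $\mathfrak F_\nu(\mathbf K^s_\nu,h,\beta)$ is finite, and $\nu_{\rm opt}=\max\{\nu_k:k=0,\dots,\mathbf K^s_\nu\}$; (4) there exist $\theta\in\operatorname{Fin}(X^{\rm in})$ and $\gamma\in\mathcal{KL}_{\rm gen}$ such that $\varphi(T^k(x))\le\gamma(\theta(x),k)$ for all $x\in X^{\rm in}$, $k\in\mathbb N$, and $\inf_{t\ge0}\gamma(\overline\theta,t)<\nu_n$ for some $n\in\mathbb N$; (5) there exists an $(X^{\rm in},T,\varphi)$-compatible Opt-Lyapunov function for $(X^{\rm in},T)$.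
   Context: Standing data: nonempty $X^{\rm in}\subseteq\mathbb R^d$, $T:\mathbb R^d\to\mathbb R^d$, $\varphi:\mathbb R^d\to\mathbb R$ with $\varphi(0)=0$; $\nu_k=\sup_{x\in X^{\rm in}}\varphi(T^k(x))$ finite for all $k$, $\nu_{\rm opt}=\sup_k\nu_k$. $G^{>}_\nu=\{k:\nu_k>\limsup_n\nu_n\}$; $\mathbf K^s_\nu=\inf\{k:\max_{0\le j\le k}\nu_j>\sup_{j>k}\nu_j\}$. $\Gamma(\nu)$: pairs $(h,\beta)$ with $h:\mathbb R\to\mathbb R$ strictly increasing continuous on $[0,1]$, $\beta\in(0,1)$, $\nu_k\le h(\beta^k)$ for all $k$. $\mathfrak F_\nu(k,h,\beta)=\ln(h^{-1}_{[0,1]}(\nu_k))/\ln\beta$ if $(h,\beta)\in\Gamma(\nu)$ and $\nu_k>h(0)$, else $+\infty$. $\overline f=\sup_{X^{\rm in}}f$, $\operatorname{Fin}(X^{\rm in})=\{f:\mathbb R^d\to\mathbb R\cup\{+\infty\}:\overline f<+\infty\}$. $\mathcal{KL}_{\rm gen}$: $\gamma:\mathbb R\times\mathbb R_+\to\mathbb R$ increasing in the first variable and decreasing in the second (not necessarily strictly). Opt-Lyapunov function for $(X^{\rm in},T)$: $V:\mathbb R^d\to[0,+\infty]$ with $\sup_{X^{\rm in}}V\in(0,1]$ and $V\circ T\le\lambda V$ for some $\lambda\in(0,1)$. Such $V$ is $(X^{\rm in},T,\varphi)$-compatible if for some $k\in G^{>}_\nu$ there exist $\varepsilon,\eta>0$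 such that for all $x\in X^{\rm in}$, $j\in\mathbb N$ with $\varphi(T^j(x))>\nu_k-\eta$, $V(T^j(x))>\varepsilon$. *)

theory Defs
  imports "HOL-Analysis.Analysis" "HOL-Library.Liminf_Limsup" "HOL-Library.Extended_Real"
    "HOL-Library.Extended_Nat"
begin

definition nu :: "'a set \<Rightarrow> ('a \<Rightarrow> 'a) \<Rightarrow> ('a \<Rightarrow> real) \<Rightarrow> nat \<Rightarrow> real" where
  "nu X T \<phi> k = (SUP x\<in>X. \<phi> ((T ^^ k) x))"

definition nu_opt :: "(nat \<Rightarrow> real) \<Rightarrow> ereal" where
  "nu_opt \<nu> = (SUP k. ereal (\<nu> k))"

definition Ggt :: "(nat \<Rightarrow> real) \<Rightarrow> nat set" where
  "Ggt \<nu> = {k. ereal (\<nu> k) > limsup (\<lambda>n. ereal (\<nu> n))}"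

text \<open>K^s_nu = inf {k. max_{j<=k} nu_j > sup_{j>k} nu_j}; inf of the empty set is infinity.\<close>
definition Ks :: "(nat \<Rightarrow> real) \<Rightarrow> enat" where
  "Ks \<nu> = Inf (enat ` {k. ereal (Max (\<nu> ` {0..k})) > (SUP j\<in>{k<..}. ereal (\<nu> j))})"

definition Gamma :: "(nat \<Rightarrow> real) \<Rightarrow> ((real \<Rightarrow> real) \<times> real) set" where
  "Gamma \<nu> = {(h, \<beta>). strict_mono_on {0..1} h \<and> continuous_on {0..1} h \<and>
      0 < \<beta> \<and> \<beta> < 1 \<and> (\<forall>k. \<nu> k \<le> h (\<beta> ^ k))}"

definition frakF :: "(nat \<Rightarrow> real) \<Rightarrow> nat \<Rightarrow> (real \<Rightarrow> real) \<Rightarrow> real \<Rightarrow> ereal" where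
  "frakF \<nu> k h \<beta> = (if (h, \<beta>) \<in> Gamma \<nu> \<and> \<nu> k > h 0
      then ereal (ln (the_inv_into {0..1} h (\<nu> k)) / ln \<beta>) else \<infinity>)"

definition Fin :: "'a set \<Rightarrow> ('a \<Rightarrow> ereal) set" where
  "Fin X = {f. (\<forall>x. f x \<noteq> -\<infinity>) \<and> (SUP x\<in>X. f x) < \<infinity>}"

definition KLgen :: "(real \<Rightarrow> real \<Rightarrow> real) set" where
  "KLgen = {\<gamma>. (\<forall>t\<ge>0. mono (\<lambda>s. \<gamma> s t)) \<and> (\<forall>s. antimono_on {0..} (\<gamma> s))}"

definition opt_lyapunov :: "'a set \<Rightarrow> ('a \<Rightarrow> 'a) \<Rightarrow> ('a \<Rightarrow> ereal) \<Rightarrow> bool" where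
  "opt_lyapunov X T V \<longleftrightarrow> (\<forall>x. V x \<ge> 0) \<and>
     0 < (SUP x\<in>X. V x) \<and> (SUP x\<in>X. V x) \<le> 1 \<and>
     (\<exists>lam::real. 0 < lam \<and> lam < 1 \<and> (\<forall>x. V (T x) \<le> ereal lam * V x))"

definition compatible :: "'a set \<Rightarrow> ('a \<Rightarrow> 'a) \<Rightarrow> ('a \<Rightarrow> real) \<Rightarrow> ('a \<Rightarrow> ereal) \<Rightarrow> bool" where
  "compatible X T \<phi> V \<longleftrightarrow>
     (\<exists>k\<in>Ggt (nu X T \<phi>). \<exists>\<epsilon>>0. \<exists>\<eta>>0. \<forall>x\<in>X. \<forall>j.
        \<phi> ((T ^^ j) x) > nu X T \<phi> k - \<eta> \<longrightarrow> V ((T ^^ j) x) > ereal \<epsilon>)"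

end

theory Submission imports Defs begin

lemma Ggt_char: "Ggt \<nu> \<noteq> {} \<longleftrightarrow> (\<exists>c N k. (\<forall>n\<ge>N. \<nu> n \<le> c) \<and> c < \<nu> k)"
proof
  assume "Ggt \<nu> \<noteq> {}"
  then obtain k where k: "ereal (\<nu> k) > limsup (\<lambda>n. ereal (\<nu> n))" by (auto simp: Ggt_def)
  then obtain c where c: "limsup (\<lambda>n. ereal (\<nu> n)) < ereal c" "ereal c < ereal (\<nu> k)"
    using ereal_dense2 by blast
  then have "eventually (\<lambda>n. ereal (\<nu> n) < ereal c) sequentially" using Limsup_lessD by blast
  then obtain N where "\<forall>n\<ge>N. \<nu> n < c" by (auto simp: eventually_sequentially)
  then show "\<exists>c N k. (\<forall>n\<ge>N. \<nu> n \<le> c) \<and> c < \<nu> k" using c(2)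
    by (intro exI[of _ c] exI[of _ N] exI[of _ k]) auto
next
  assume "\<exists>c N k. (\<forall>n\<ge>N. \<nu> n \<le> c) \<and> c < \<nu> k"
  then obtain c N k where h: "\<forall>n\<ge>N. \<nu> n \<le> c" "c < \<nu> k" by blast
  have "eventually (\<lambda>n. ereal (\<nu> n) \<le> ereal c) sequentially"
    using h(1) by (auto simp: eventually_sequentially)
  hence "limsup (\<lambda>n. ereal (\<nu> n)) \<le> ereal c" by (rule Limsup_bounded)
  also have "\<dots> < ereal (\<nu> k)" using h(2) by simp
  finally show "Ggt \<nu> \<noteq> {}" by (auto simp: Ggt_def)
qed

lemma mk_Gamma:
  assumes h: "\<forall>n\<ge>N. \<nu> n \<le> c"
  shows "(\<lambda>t. c + ((\<bar>Max (\<nu> ` {..N})\<bar> + \<bar>c\<bar> + 1) * 2 ^ N) * t, 1/2) \<in> Gamma \<nu>"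
proof -
  define B where "B = \<bar>Max (\<nu> ` {..N})\<bar> + \<bar>c\<bar> + 1"
  have B: "B > 0" unfolding B_def by simp
  have A: "B * 2 ^ N > 0" using B by simp
  have "\<nu> n \<le> c + B * 2 ^ N * (1/2) ^ n" for n
  proof (cases "n \<ge> N")
    case True
    then show ?thesis using h A by (simp add: add_increasing2)
  next
    case False
    have "\<nu> n \<le> Max (\<nu> ` {..N})" using False by (intro Max_ge) auto
    hence "\<nu> n - c \<le> B" unfolding B_def by linarith
    also have "B = B * 2 ^ N * (1/2) ^ N" by (simp add: power_one_over)
    also have "\<dots> \<le> B * 2 ^ N * (1/2) ^ n"
      using False A by (intro mult_left_mono power_decreasing) auto
    finally show ?thesis by simp
  qed
  moreover have "strict_mono_on {0..1} (\<lambda>t. c + B * 2 ^ N * t)"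
    using A by (auto simp: strict_mono_on_def intro: mult_strict_left_mono)
  moreover have "continuous_on {0..1} (\<lambda>t. c + B * 2 ^ N * t)"
    by (intro continuous_intros)
  ultimately show ?thesis unfolding Gamma_def B_def[symmetric] by auto
qed

lemma Gamma_limsup:
  assumes "(h, \<beta>) \<in> Gamma \<nu>" "h 0 < \<nu> k"
  shows "Ggt \<nu> \<noteq> {}"
proof -
  have g: "continuous_on {0..1} h" "0 < \<beta>" "\<beta> < 1" "\<forall>k. \<nu> k \<le> h (\<beta> ^ k)"
    using assms(1) by (auto simp: Gamma_def)
  have "(\<lambda>n. h (\<beta> ^ n)) \<longlonglongrightarrow> h 0"
    using g by (intro continuous_on_tendsto_compose[OF g(1)] LIMSEQ_power_zero)
      (auto intro!: always_eventually power_le_one)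
  moreover define c where "c = (h 0 + \<nu> k) / 2"
  have "h 0 < c" "c < \<nu> k" using assms(2) unfolding c_def by auto
  ultimately have "eventually (\<lambda>n. h (\<beta> ^ n) < c) sequentially" using order_tendstoD(2) by blast
  then obtain N where "\<forall>n\<ge>N. h (\<beta> ^ n) < c" by (auto simp: eventually_sequentially)
  hence "\<forall>n\<ge>N. \<nu> n \<le> c" using g(4) by (meson less_imp_le order_trans)
  thus ?thesis using \<open>c < \<nu> k\<close> Ggt_char by blast
qed


lemma Ks_lemma:
  assumes "Ggt \<nu> \<noteq> {}"
  shows "\<exists>K. Ks \<nu> = enat K \<and> \<nu> K = Max (\<nu> ` {0..K}) \<and> ereal (\<nu> K) > (SUP j\<in>{K<..}. ereal (\<nu> j))"
proof -
  define S where "S = {k. ereal (Max (\<nu> ` {0..k})) > (SUP j\<in>{k<..}. ereal (\<nu> j))}"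
  obtain c N k where h: "\<forall>n\<ge>N. \<nu> n \<le> c" "c < \<nu> k" using assms Ggt_char by blast
  define K0 where "K0 = max k N"
  have "(SUP j\<in>{K0<..}. ereal (\<nu> j)) \<le> ereal c"
    using h(1) by (intro SUP_least) (auto simp: K0_def)
  also have "\<dots> < ereal (\<nu> k)" using h(2) by simp
  also have "\<nu> k \<le> Max (\<nu> ` {0..K0})" by (intro Max_ge) (auto simp: K0_def)
  finally have "K0 \<in> S" unfolding S_def by simp
  define K where "K = (LEAST k. k \<in> S)"
  have KS: "K \<in> S" unfolding K_def using \<open>K0 \<in> S\<close> by (rule LeastI)
  have Kmin: "\<And>j. j \<in> S \<Longrightarrow> K \<le> j" unfolding K_def by (rule Least_le)
  have "Ks \<nu> = enat K"
    unfolding Ks_def S_def[symmetric]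
  proof (rule antisym)
    show "Inf (enat ` S) \<le> enat K" by (rule Inf_lower) (simp add: KS)
    show "enat K \<le> Inf (enat ` S)" by (rule Inf_greatest) (auto dest: Kmin)
  qed
  define m where "m = Max (\<nu> ` {0..K})"
  define s where "s = (SUP j\<in>{K<..}. ereal (\<nu> j))"
  have ms: "ereal m > s" using KS unfolding S_def m_def s_def by simp
  have "\<nu> K = m"
  proof (cases K)
    case 0 then show ?thesis by (simp add: m_def)
  next
    case (Suc K')
    have "K' \<notin> S" using Kmin[of K'] Suc by auto
    hence 1: "ereal (Max (\<nu> ` {0..K'})) \<le> (SUP j\<in>{K'<..}. ereal (\<nu> j))" unfolding S_def by simp
    have "{K'<..} = insert K {K<..}" using Suc by auto
    hence 2: "(SUP j\<in>{K'<..}. ereal (\<nu> j)) = sup (ereal (\<nu> K)) s" by (simp add: s_def)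
    have "{0..K} = insert K {0..K'}" using Suc by auto
    hence 3: "m = max (\<nu> K) (Max (\<nu> ` {0..K'}))" unfolding m_def by (simp add: Max_insert)
    show ?thesis
    proof (rule ccontr)
      assume "\<nu> K \<noteq> m"
      hence "\<nu> K < m" "m = Max (\<nu> ` {0..K'})" using 3 by auto
      hence "ereal m \<le> sup (ereal (\<nu> K)) s" using 1 2 by simp
      hence "ereal m \<le> ereal (\<nu> K) \<or> ereal m \<le> s" by (simp add: le_max_iff_disj)
      thus False using \<open>\<nu> K < m\<close> ms by auto
    qed
  qed
  thus ?thesis using \<open>Ks \<nu> = enat K\<close> ms unfolding m_def s_def by auto
qed

lemma P1_P3:
  assumes "Ggt \<nu> \<noteq> {}"
  shows "\<exists>(h, \<beta>)\<in>Gamma \<nu>. Ks \<nu> \<noteq> \<infinity> \<and>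
             frakF \<nu> (the_enat (Ks \<nu>)) h \<beta> < \<infinity> \<and>
             nu_opt \<nu> = ereal (Max (\<nu> ` {0..the_enat (Ks \<nu>)}))"
proof -
  obtain K where K: "Ks \<nu> = enat K" "\<nu> K = Max (\<nu> ` {0..K})"
    "ereal (\<nu> K) > (SUP j\<in>{K<..}. ereal (\<nu> j))"
    using Ks_lemma[OF assms] by blast
  obtain c where c: "(SUP j\<in>{K<..}. ereal (\<nu> j)) < ereal c" "ereal c < ereal (\<nu> K)"
    using K(3) ereal_dense2 by blast
  have le: "ereal (\<nu> j) \<le> (SUP j\<in>{K<..}. ereal (\<nu> j))" if "j \<ge> Suc K" for j
    using that by (intro SUP_upper) auto
  have hN: "\<forall>n\<ge>Suc K. \<nu> n \<le> c" using le c(1) by (metis ereal_less_eq(3) less_imp_le order_trans)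
  define h where "h = (\<lambda>t. c + ((\<bar>Max (\<nu> ` {..Suc K})\<bar> + \<bar>c\<bar> + 1) * 2 ^ Suc K) * t)"
  have G: "(h, 1/2) \<in> Gamma \<nu>" unfolding h_def by (rule mk_Gamma[OF hN])
  have "h 0 < \<nu> K" using c(2) by (simp add: h_def)
  hence F: "frakF \<nu> K h (1/2) < \<infinity>" using G by (simp add: frakF_def)
  have "nu_opt \<nu> = ereal (\<nu> K)"
    unfolding nu_opt_def
  proof (rule antisym)
    show "(SUP k. ereal (\<nu> k)) \<le> ereal (\<nu> K)"
    proof (rule SUP_least)
      fix j
      show "ereal (\<nu> j) \<le> ereal (\<nu> K)"
      proof (cases "j \<le> K")
        case True
        have "\<nu> j \<le> Max (\<nu> ` {0..K})" using True by (intro Max_ge) auto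
        then show ?thesis using K(2) by simp
      next
        case False
        hence "ereal (\<nu> j) \<le> (SUP j\<in>{K<..}. ereal (\<nu> j))" by (intro le) simp
        also note K(3)
        finally show ?thesis by simp
      qed
    qed
  qed (rule SUP_upper, simp)
  thus ?thesis using G F K(1,2) by auto
qed


theorem mainTheorem20:
  fixes X :: "(real ^ 'd) set" and T :: "real ^ 'd \<Rightarrow> real ^ 'd" and \<phi> :: "real ^ 'd \<Rightarrow> real"
  assumes "X \<noteq> {}"
    and "\<phi> 0 = 0"
    and "\<forall>k. bdd_above ((\<lambda>x. \<phi> ((T ^^ k) x)) ` X)"
  shows "let \<nu> = nu X T \<phi>;
     P1 = (Ggt \<nu> \<noteq> {});
     P2 = (\<exists>(h, \<beta>)\<in>Gamma \<nu>. {k. \<nu> k > h 0} \<noteq> {});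
     P3 = (\<exists>(h, \<beta>)\<in>Gamma \<nu>. Ks \<nu> \<noteq> \<infinity> \<and>
             frakF \<nu> (the_enat (Ks \<nu>)) h \<beta> < \<infinity> \<and>
             nu_opt \<nu> = ereal (Max (\<nu> ` {0..the_enat (Ks \<nu>)})));
     P4 = (\<exists>\<theta>\<in>Fin X. \<exists>\<gamma>\<in>KLgen.
             (\<forall>x\<in>X. \<forall>k::nat. \<phi> ((T ^^ k) x) \<le> \<gamma> (real_of_ereal (\<theta> x)) (real k)) \<and>
             (\<exists>n. (INF t\<in>{0::real..}. ereal (\<gamma> (real_of_ereal (SUP x\<in>X. \<theta> x)) t)) < ereal (\<nu> n)));
     P5 = (\<exists>V. opt_lyapunov X T V \<and> compatible X T \<phi> V)
   in (P1 \<longleftrightarrow> P2) \<and> (P1 \<longleftrightarrow> P3) \<and> (P1 \<longleftrightarrow> P4) \<and> (P1 \<longleftrightarrow> P5)"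
proof -
  define \<nu> where "\<nu> = nu X T \<phi>"
  have phi_le: "\<phi> ((T^^j) x) \<le> \<nu> j" if "x \<in> X" for x j
    unfolding \<nu>_def nu_def using that assms(3) by (intro cSUP_upper) auto
  have nu_gt: "\<exists>x\<in>X. c < \<phi> ((T^^j) x)" if "c < \<nu> j" for c j
    using that less_cSUP_iff[OF assms(1) assms(3)[rule_format, of j]] unfolding \<nu>_def nu_def by blast
  have nu_le: "\<nu> j \<le> c" if "\<forall>x\<in>X. \<phi> ((T^^j) x) \<le> c" for c j
    unfolding \<nu>_def nu_def using that assms(1) by (intro cSUP_least) auto
  have E12: "Ggt \<nu> \<noteq> {} \<longleftrightarrow> (\<exists>(h, \<beta>)\<in>Gamma \<nu>. {k. \<nu> k > h 0} \<noteq> {})"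
  proof
    assume "Ggt \<nu> \<noteq> {}"
    then obtain c N k where h: "\<forall>n\<ge>N. \<nu> n \<le> c" "c < \<nu> k" using Ggt_char by blast
    show "\<exists>(h, \<beta>)\<in>Gamma \<nu>. {k. \<nu> k > h 0} \<noteq> {}"
    proof (rule bexI[OF _ mk_Gamma[OF h(1)]])
      have "k \<in> {k. \<nu> k > c}" using h(2) by simp
      then show "case (\<lambda>t. c + ((\<bar>Max (\<nu> ` {..N})\<bar> + \<bar>c\<bar> + 1) * 2 ^ N) * t, 1/2::real) of (h, \<beta>) \<Rightarrow> {k. \<nu> k > h 0} \<noteq> {}"
        by auto
    qed
  next
    assume "\<exists>(h, \<beta>)\<in>Gamma \<nu>. {k. \<nu> k > h 0} \<noteq> {}"
    then show "Ggt \<nu> \<noteq> {}" using Gamma_limsup by blast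
  qed
  have E13: "Ggt \<nu> \<noteq> {} \<longleftrightarrow> (\<exists>(h, \<beta>)\<in>Gamma \<nu>. Ks \<nu> \<noteq> \<infinity> \<and>
             frakF \<nu> (the_enat (Ks \<nu>)) h \<beta> < \<infinity> \<and>
             nu_opt \<nu> = ereal (Max (\<nu> ` {0..the_enat (Ks \<nu>)})))"
  proof
    assume "Ggt \<nu> \<noteq> {}" then show "\<exists>(h, \<beta>)\<in>Gamma \<nu>. Ks \<nu> \<noteq> \<infinity> \<and>
             frakF \<nu> (the_enat (Ks \<nu>)) h \<beta> < \<infinity> \<and>
             nu_opt \<nu> = ereal (Max (\<nu> ` {0..the_enat (Ks \<nu>)}))" by (rule P1_P3)
  next
    assume "\<exists>(h, \<beta>)\<in>Gamma \<nu>. Ks \<nu> \<noteq> \<infinity> \<and>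
             frakF \<nu> (the_enat (Ks \<nu>)) h \<beta> < \<infinity> \<and>
             nu_opt \<nu> = ereal (Max (\<nu> ` {0..the_enat (Ks \<nu>)}))"
    then obtain h \<beta> where "(h, \<beta>) \<in> Gamma \<nu>" "frakF \<nu> (the_enat (Ks \<nu>)) h \<beta> < \<infinity>" by blast
    then have "h 0 < \<nu> (the_enat (Ks \<nu>))" by (auto simp: frakF_def split: if_splits)
    then show "Ggt \<nu> \<noteq> {}" using Gamma_limsup \<open>(h, \<beta>) \<in> Gamma \<nu>\<close> by blast
  qed
  have E14: "Ggt \<nu> \<noteq> {} \<longleftrightarrow> (\<exists>\<theta>\<in>Fin X. \<exists>\<gamma>\<in>KLgen.
             (\<forall>x\<in>X. \<forall>k::nat. \<phi> ((T ^^ k) x) \<le> \<gamma> (real_of_ereal (\<theta> x)) (real k)) \<and>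
             (\<exists>n. (INF t\<in>{0::real..}. ereal (\<gamma> (real_of_ereal (SUP x\<in>X. \<theta> x)) t)) < ereal (\<nu> n)))"
  proof
    assume "Ggt \<nu> \<noteq> {}"
    then obtain c N k where h: "\<forall>n\<ge>N. \<nu> n \<le> c" "c < \<nu> k" using Ggt_char by blast
    define B where "B = max c (Max (\<nu> ` {..N}))"
    define \<gamma> where "\<gamma> = (\<lambda>(s::real) (t::real). if t < real N then B else c)"
    define \<theta> where "\<theta> = (\<lambda>x::real^'d. 0::ereal)"
    have "\<theta> \<in> Fin X" using assms(1) by (simp add: Fin_def \<theta>_def)
    moreover have "\<gamma> \<in> KLgen"
      by (auto simp: KLgen_def \<gamma>_def mono_def monotone_on_def B_def)
    moreover have "\<phi> ((T ^^ j) x) \<le> \<gamma> (real_of_ereal (\<theta> x)) (real j)" if "x \<in> X" for x j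
    proof (cases "j < N")
      case True
      have "\<nu> j \<le> Max (\<nu> ` {..N})" using True by (intro Max_ge) auto
      hence "\<phi> ((T ^^ j) x) \<le> Max (\<nu> ` {..N})" using phi_le[OF that, of j] by linarith
      hence "\<phi> ((T ^^ j) x) \<le> B" unfolding B_def by (simp add: le_max_iff_disj)
      then show ?thesis using True by (simp add: \<gamma>_def)
    next
      case False
      hence "\<nu> j \<le> c" using h(1) by simp
      hence "\<phi> ((T ^^ j) x) \<le> c" using phi_le[OF that, of j] by linarith
      then show ?thesis using False by (simp add: \<gamma>_def)
    qed
    moreover have "(INF t\<in>{0::real..}. ereal (\<gamma> (real_of_ereal (SUP x\<in>X. \<theta> x)) t)) < ereal (\<nu> k)"
      unfolding INF_less_iff using h(2) by (intro bexI[of _ "real N"]) (auto simp: \<gamma>_def)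
    ultimately show "\<exists>\<theta>\<in>Fin X. \<exists>\<gamma>\<in>KLgen.
             (\<forall>x\<in>X. \<forall>k::nat. \<phi> ((T ^^ k) x) \<le> \<gamma> (real_of_ereal (\<theta> x)) (real k)) \<and>
             (\<exists>n. (INF t\<in>{0::real..}. ereal (\<gamma> (real_of_ereal (SUP x\<in>X. \<theta> x)) t)) < ereal (\<nu> n))"
      by blast
  next
    assume "\<exists>\<theta>\<in>Fin X. \<exists>\<gamma>\<in>KLgen.
             (\<forall>x\<in>X. \<forall>k::nat. \<phi> ((T ^^ k) x) \<le> \<gamma> (real_of_ereal (\<theta> x)) (real k)) \<and>
             (\<exists>n. (INF t\<in>{0::real..}. ereal (\<gamma> (real_of_ereal (SUP x\<in>X. \<theta> x)) t)) < ereal (\<nu> n))"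
    then obtain \<theta> \<gamma> n where th: "\<theta> \<in> Fin X" and ga: "\<gamma> \<in> KLgen"
      and le: "\<forall>x\<in>X. \<forall>k::nat. \<phi> ((T ^^ k) x) \<le> \<gamma> (real_of_ereal (\<theta> x)) (real k)"
      and inf: "(INF t\<in>{0::real..}. ereal (\<gamma> (real_of_ereal (SUP x\<in>X. \<theta> x)) t)) < ereal (\<nu> n)"
      by blast
    define tb where "tb = real_of_ereal (SUP x\<in>X. \<theta> x)"
    obtain t0 where t0: "t0 \<ge> 0" "\<gamma> tb t0 < \<nu> n"
      using inf unfolding INF_less_iff tb_def by auto
    have thx: "real_of_ereal (\<theta> x) \<le> tb" if "x \<in> X" for x
    proof -
      have a: "\<theta> x \<le> (SUP x\<in>X. \<theta> x)" using that by (rule SUP_upper)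
      have b: "\<theta> x \<noteq> -\<infinity>" "(SUP x\<in>X. \<theta> x) < \<infinity>" using th by (auto simp: Fin_def)
      show ?thesis using a b unfolding tb_def
        by (cases "\<theta> x"; cases "SUP x\<in>X. \<theta> x") auto
    qed
    have mono1: "\<gamma> s t \<le> \<gamma> s' t" if "s \<le> s'" "t \<ge> 0" for s s' t
      using ga that by (auto simp: KLgen_def mono_def)
    have mono2: "\<gamma> s t' \<le> \<gamma> s t" if "t \<le> t'" "t \<ge> 0" for s t t'
      using ga that by (auto simp: KLgen_def monotone_on_def)
    have "\<forall>j\<ge>nat \<lceil>t0\<rceil>. \<nu> j \<le> \<gamma> tb t0"
    proof (intro allI impI nu_le ballI)
      fix j x assume j: "nat \<lceil>t0\<rceil> \<le> j" and x: "x \<in> X"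
      have jt: "t0 \<le> real j" using j by linarith
      have "\<phi> ((T ^^ j) x) \<le> \<gamma> (real_of_ereal (\<theta> x)) (real j)" using le x by blast
      also have "\<dots> \<le> \<gamma> tb (real j)" using thx[OF x] by (intro mono1) auto
      also have "\<dots> \<le> \<gamma> tb t0" using jt t0(1) by (intro mono2)
      finally show "\<phi> ((T ^^ j) x) \<le> \<gamma> tb t0" .
    qed
    then show "Ggt \<nu> \<noteq> {}" using Ggt_char t0(2) by blast
  qed
  have E15: "Ggt \<nu> \<noteq> {} \<longleftrightarrow> (\<exists>V. opt_lyapunov X T V \<and> compatible X T \<phi> V)"
  proof
    assume "\<exists>V. opt_lyapunov X T V \<and> compatible X T \<phi> V"
    then show "Ggt \<nu> \<noteq> {}" by (auto simp: compatible_def \<nu>_def)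
  next
    assume G: "Ggt \<nu> \<noteq> {}"
    then obtain c N k where h: "\<forall>n\<ge>N. \<nu> n \<le> c" "c < \<nu> k" using Ggt_char by blast
    have kG: "k \<in> Ggt \<nu>"
    proof -
      have "eventually (\<lambda>n. ereal (\<nu> n) \<le> ereal c) sequentially"
        using h(1) by (auto simp: eventually_sequentially)
      hence "limsup (\<lambda>n. ereal (\<nu> n)) \<le> ereal c" by (rule Limsup_bounded)
      also have "\<dots> < ereal (\<nu> k)" using h(2) by simp
      finally show ?thesis by (auto simp: Ggt_def)
    qed
    define \<delta> :: real where "\<delta> = (1/2) ^ N"
    have \<delta>: "\<delta> > 0" by (simp add: \<delta>_def)
    define w where "w = (\<lambda>y i. if c < \<phi> ((T^^i) y) then ereal (\<delta> * 2 ^ i) else 0)"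
    define V where "V = (\<lambda>y. SUP i. w y i)"
    have w0: "0 \<le> w y i" for y i using \<delta> by (simp add: w_def)
    have V0: "0 \<le> V y" for y unfolding V_def by (rule SUP_upper2[of 0]) (auto simp: w0)
    have wV: "w y i \<le> V y" for y i unfolding V_def by (rule SUP_upper) simp
    have VX: "V x \<le> 1" if "x \<in> X" for x
      unfolding V_def
    proof (rule SUP_least)
      fix i
      show "w x i \<le> 1"
      proof (cases "c < \<phi> ((T^^i) x)")
        case True
        hence "\<not> N \<le> i" using h(1) phi_le[OF that, of i] by force
        hence "(2::real) ^ i \<le> 2 ^ N" by (intro power_increasing) auto
        hence "\<delta> * 2 ^ i \<le> \<delta> * 2 ^ N" using \<delta> by (intro mult_left_mono) auto
        also have "\<dots> = 1" by (simp add: \<delta>_def power_one_over)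
        finally show ?thesis using True by (simp add: w_def)
      qed (simp add: w_def)
    qed
    obtain x0 where x0: "x0 \<in> X" "c < \<phi> ((T^^k) x0)" using nu_gt h(2) by blast
    have "0 < w x0 k" using x0 \<delta> by (simp add: w_def)
    also have "\<dots> \<le> V x0" by (rule wV)
    also have "\<dots> \<le> (SUP x\<in>X. V x)" using x0(1) by (rule SUP_upper)
    finally have Vpos: "0 < (SUP x\<in>X. V x)" .
    have Vle: "(SUP x\<in>X. V x) \<le> 1" using VX by (rule SUP_least)
    have Vdec: "V (T y) \<le> ereal (1/2) * V y" for y
    proof -
      have "V (T y) = (SUP i. w (T y) i)" by (simp add: V_def)
      also have "\<dots> \<le> ereal (1/2) * V y"
      proof (rule SUP_least)
        fix i
        have "w (T y) i = ereal (1/2) * w y (Suc i)"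
          by (simp add: w_def funpow_swap1)
        also have "\<dots> \<le> ereal (1/2) * V y" by (intro ereal_mult_left_mono wV) auto
        finally show "w (T y) i \<le> ereal (1/2) * V y" .
      qed
      finally show ?thesis .
    qed
    have OL: "opt_lyapunov X T V"
      unfolding opt_lyapunov_def using V0 Vpos Vle Vdec by (intro conjI allI exI[of _ "1/2"]) auto
    have key: "\<forall>x\<in>X. \<forall>j. \<nu> k - (\<nu> k - c) < \<phi> ((T ^^ j) x) \<longrightarrow> V ((T ^^ j) x) > ereal (\<delta>/2)"
    proof (intro ballI allI impI)
      fix x j assume "\<nu> k - (\<nu> k - c) < \<phi> ((T ^^ j) x)"
      hence "w ((T ^^ j) x) 0 = ereal \<delta>" by (simp add: w_def)
      hence a: "ereal \<delta> \<le> V ((T ^^ j) x)" using wV by metis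
      have b: "ereal (\<delta>/2) < ereal \<delta>" using \<delta> by simp
      show "V ((T ^^ j) x) > ereal (\<delta>/2)" using order_less_le_trans[OF b a] .
    qed
    have CP: "compatible X T \<phi> V"
      unfolding compatible_def \<nu>_def[symmetric]
      using kG key \<delta> h(2) by (intro bexI[OF _ kG] exI[of _ "\<delta>/2"] conjI exI[of _ "\<nu> k - c"]) auto
    show "\<exists>V. opt_lyapunov X T V \<and> compatible X T \<phi> V" using OL CP by blast
  qed
  show ?thesis unfolding Let_def \<nu>_def[symmetric] using E12 E13 E14 E15 by blast
qed

end
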